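(* Assume $p=2$ and let $s\ge1$. Then $V^{s-1}:K\to W_s(K)$ induces an isomorphism $\mathrm{fil}'_2K/\mathrm{fil}'_1K\xrightarrow{\sim}\mathrm{fil}'_2W_s(K)/\mathrm{fil}'_1W_s(K)$.
   Context: $K$ is a complete discrete valuation field of characteristic $p>0$ with normalized valuation $\mathrm{ord}_K$. $W_s(K)$: Witt vectors of length $s$, elements $(a_{s-1},\dots,a_0)$, $V(a_{s-1},\dots,a_0)=(0,a_{s-1},\dots,a_0)$, $W_1(K)=K$. $\mathrm{ord}_K(a)=\min_ip^i\mathrm{ord}_K(a_i)$, $\mathrm{fil}_nW_s(K)=\{a:\mathrm{ord}_K(a)\ge-n\}$. For $m\ge1$, with $s'=\min\{\mathrm{ord}_p(m),s\}$, $\mathrm{fil}'_mW_s(K)=\mathrm{fil}_{m-1}W_s(K)+V^{s-s'}\mathrm{fil}_mW_{s'}(K)$. *)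

theory Defs
  imports Main "HOL-Library.Poly_Mapping" "HOL-Computational_Algebra.Primes"
begin

text \<open>A normalized discrete valuation on a field is given by its values on nonzero
  elements (the value of 0 is +infinity and is never consulted).\<close>

definition normalized_discrete_valuation :: "('a::field \<Rightarrow> int) \<Rightarrow> bool" where
  "normalized_discrete_valuation ord \<longleftrightarrow>
     (\<forall>x y. x \<noteq> 0 \<and> y \<noteq> 0 \<longrightarrow> ord (x * y) = ord x + ord y) \<and>
     (\<forall>x y. x \<noteq> 0 \<and> y \<noteq> 0 \<and> x + y \<noteq> 0 \<longrightarrow> min (ord x) (ord y) \<le> ord (x + y)) \<and>
     (\<exists>\<pi>. \<pi> \<noteq> 0 \<and> ord \<pi> = 1)"

text \<open>"x is N-close to y": ord(x - y) \<ge> N (with ord 0 = +infinity).\<close>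
definition val_close :: "('a::field \<Rightarrow> int) \<Rightarrow> int \<Rightarrow> 'a \<Rightarrow> 'a \<Rightarrow> bool" where
  "val_close ord N x y \<longleftrightarrow> x = y \<or> N \<le> ord (x - y)"

definition complete_discrete_valuation :: "('a::field \<Rightarrow> int) \<Rightarrow> bool" where
  "complete_discrete_valuation ord \<longleftrightarrow> normalized_discrete_valuation ord \<and>
     (\<forall>X :: nat \<Rightarrow> 'a.
        (\<forall>N. \<exists>M. \<forall>m\<ge>M. \<forall>n\<ge>M. val_close ord N (X m) (X n)) \<longrightarrow>
        (\<exists>L. \<forall>N. \<exists>M. \<forall>n\<ge>M. val_close ord N (X n) L))"

type_synonym zpoly = "(nat \<Rightarrow>\<^sub>0 nat) \<Rightarrow>\<^sub>0 int"

definition pvar :: "nat \<Rightarrow> zpoly" where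
  "pvar k = Poly_Mapping.single (Poly_Mapping.single k 1) 1"

definition Xv :: "nat \<Rightarrow> zpoly" where "Xv i = pvar (2 * i)"
definition Yv :: "nat \<Rightarrow> zpoly" where "Yv i = pvar (2 * i + 1)"

definition witt_poly :: "nat \<Rightarrow> (nat \<Rightarrow> zpoly) \<Rightarrow> nat \<Rightarrow> zpoly" where
  "witt_poly p Z n = (\<Sum>i\<le>n. of_nat (p ^ i) * (Z i) ^ (p ^ (n - i)))"

definition coeff_div :: "int \<Rightarrow> zpoly \<Rightarrow> zpoly" where
  "coeff_div d P = Poly_Mapping.map (\<lambda>c. c div d) P"

text \<open>The list [S_0, ..., S_{n-1}] of Witt addition polynomials, determined by
  w_n(S) = w_n(X) + w_n(Y).\<close>
fun witt_sum_list :: "nat \<Rightarrow> nat \<Rightarrow> zpoly list" where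
  "witt_sum_list p 0 = []"
| "witt_sum_list p (Suc n) =
     (let L = witt_sum_list p n in
      L @ [coeff_div (int (p ^ n))
             (witt_poly p Xv n + witt_poly p Yv n
              - (\<Sum>i<n. of_nat (p ^ i) * (L ! i) ^ (p ^ (n - i))))])"

definition witt_sum_poly :: "nat \<Rightarrow> nat \<Rightarrow> zpoly" where
  "witt_sum_poly p n = witt_sum_list p (Suc n) ! n"

definition zpoly_eval :: "(nat \<Rightarrow> 'a::comm_ring_1) \<Rightarrow> zpoly \<Rightarrow> 'a" where
  "zpoly_eval f P = (\<Sum>m\<in>Poly_Mapping.keys P.
      of_int (Poly_Mapping.lookup P m) * (\<Prod>i\<in>Poly_Mapping.keys m. f i ^ Poly_Mapping.lookup m i))"

text \<open>An element (a_{s-1}, ..., a_0) of W_s(K) is the list [a_{s-1}, ..., a_0] of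
  length s.  The head a_{s-1} is the 0-th Witt component in the usual
  indexing, i.e. the list entry at position j is the j-th usual Witt component.
  Hence V(a_{s-1},...,a_0) = (0,a_{s-1},...,a_0) is consing 0, and W_1(K) = K via a \<mapsto> [a].\<close>

definition witt_add :: "nat \<Rightarrow> 'a::comm_ring_1 list \<Rightarrow> 'a list \<Rightarrow> 'a list" where
  "witt_add p x y = map (\<lambda>n. zpoly_eval
       (\<lambda>k. if even k then x ! (k div 2) else y ! (k div 2)) (witt_sum_poly p n))
     [0..<length x]"

definition witt_V :: "'a::zero list \<Rightarrow> 'a list" where
  "witt_V a = 0 # a"

definition wcomp :: "'a list \<Rightarrow> nat \<Rightarrow> 'a" where
  "wcomp a i = a ! (length a - 1 - i)"

definition witt_fil :: "('a::field \<Rightarrow> int) \<Rightarrow> nat \<Rightarrow> int \<Rightarrow> nat \<Rightarrow> 'a list set" where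
  "witt_fil ord p n s = {a. length a = s \<and>
      (\<forall>i<s. wcomp a i \<noteq> 0 \<longrightarrow> - n \<le> int (p ^ i) * ord (wcomp a i))}"

definition witt_fil' :: "('a::field \<Rightarrow> int) \<Rightarrow> nat \<Rightarrow> nat \<Rightarrow> nat \<Rightarrow> 'a list set" where
  "witt_fil' ord p m s =
    (let s' = min (multiplicity p m) s in
     {witt_add p a b | a b. a \<in> witt_fil ord p (int m - 1) s \<and>
        b \<in> (witt_V ^^ (s - s')) ` witt_fil ord p (int m) s'})"

end

theory Submission imports Defs begin

definition mon :: "(nat \<Rightarrow> 'a::comm_ring_1) \<Rightarrow> (nat \<Rightarrow>\<^sub>0 nat) \<Rightarrow> 'a" where
  "mon f m = (\<Prod>i\<in>Poly_Mapping.keys m. f i ^ Poly_Mapping.lookup m i)"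

lemma mon_superset:
  assumes "finite S" "Poly_Mapping.keys m \<subseteq> S"
  shows "mon f m = (\<Prod>i\<in>S. f i ^ Poly_Mapping.lookup m i)"
  unfolding mon_def
  by (rule prod.mono_neutral_left[OF assms(1,2)]) (simp add: in_keys_iff)

lemma mon_add: "mon f (m + n) = mon f m * mon f n"
proof -
  let ?S = "Poly_Mapping.keys m \<union> Poly_Mapping.keys n"
  have "mon f (m + n) = (\<Prod>i\<in>?S. f i ^ Poly_Mapping.lookup (m+n) i)"
    by (rule mon_superset) (auto dest: keys_add[THEN subsetD])
  also have "\<dots> = (\<Prod>i\<in>?S. f i ^ Poly_Mapping.lookup m i) * (\<Prod>i\<in>?S. f i ^ Poly_Mapping.lookup n i)"
    by (simp add: lookup_add power_add prod.distrib)
  also have "\<dots> = mon f m * mon f n"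
    by (simp add: mon_superset[symmetric])
  finally show ?thesis .
qed

lemma mon_zero [simp]: "mon f 0 = 1"
  by (simp add: mon_def)

lemma mon_vanish:
  assumes "i \<in> Poly_Mapping.keys m" "f i = 0"
  shows "mon f m = 0"
  unfolding mon_def using assms
  by (intro prod_zero) (use assms in \<open>auto simp: in_keys_iff zero_power intro!: bexI[of _ i]\<close>)

lemma eval_superset:
  assumes "finite S" "Poly_Mapping.keys P \<subseteq> S"
  shows "zpoly_eval f P = (\<Sum>m\<in>S. of_int (Poly_Mapping.lookup P m) * mon f m)"
  unfolding zpoly_eval_def mon_def[symmetric]
  by (rule sum.mono_neutral_left[OF assms(1,2)]) (simp add: in_keys_iff)

lemma eval_add: "zpoly_eval f (P + Q) = zpoly_eval f P + zpoly_eval f Q"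
proof -
  let ?S = "Poly_Mapping.keys P \<union> Poly_Mapping.keys Q"
  have "zpoly_eval f (P + Q) = (\<Sum>m\<in>?S. of_int (Poly_Mapping.lookup (P+Q) m) * mon f m)"
    by (rule eval_superset) (auto dest: keys_add[THEN subsetD])
  also have "\<dots> = (\<Sum>m\<in>?S. of_int (Poly_Mapping.lookup P m) * mon f m) + (\<Sum>m\<in>?S. of_int (Poly_Mapping.lookup Q m) * mon f m)"
    by (simp add: lookup_add distrib_right sum.distrib)
  also have "\<dots> = zpoly_eval f P + zpoly_eval f Q"
    by (simp add: eval_superset[symmetric])
  finally show ?thesis .
qed

lemma eval_zero [simp]: "zpoly_eval f 0 = 0"
  by (simp add: zpoly_eval_def)

lemma eval_single: "zpoly_eval f (Poly_Mapping.single m c) = of_int c * mon f m"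
  by (cases "c = 0") (simp_all add: zpoly_eval_def mon_def)

lemma update_as_add:
  "a \<notin> Poly_Mapping.keys f \<Longrightarrow> Poly_Mapping.update a b f = f + Poly_Mapping.single a b"
  by (rule poly_mapping_eqI) (auto simp: lookup_update lookup_add lookup_single in_keys_iff when_def)

lemma pm_induct:
  assumes "P 0" "\<And>f a b. a \<notin> Poly_Mapping.keys f \<Longrightarrow> b \<noteq> 0 \<Longrightarrow> P f \<Longrightarrow> P (f + Poly_Mapping.single a b)"
  shows "P f"
  by (induct f rule: update_induct) (auto simp: update_as_add assms)

lemma eval_mult_single:
  "zpoly_eval f (Poly_Mapping.single m a * Q) = of_int a * mon f m * zpoly_eval f Q"
proof (induct Q rule: pm_induct)
  case 1 then show ?case by simp
next
  case (2 Q n b)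
  then show ?case
    by (simp add: distrib_left mult_single eval_add eval_single mon_add)
qed

lemma eval_mult: "zpoly_eval f (P * Q) = zpoly_eval f P * zpoly_eval f Q"
proof (induct P rule: pm_induct)
  case 1 then show ?case by simp
next
  case (2 P n b)
  then show ?case
    by (simp add: distrib_right eval_add eval_mult_single eval_single)
qed

lemma eval_one [simp]: "zpoly_eval f 1 = 1"
  using eval_single[of f 0 1] by simp

lemma eval_uminus: "zpoly_eval f (- P) = - zpoly_eval f P"
  using eval_add[of f "-P" P] by (simp add: eq_neg_iff_add_eq_0)

lemma eval_diff: "zpoly_eval f (P - Q) = zpoly_eval f P - zpoly_eval f Q"
  using eval_add[of f P "-Q"] by (simp add: eval_uminus)

lemma eval_of_nat [simp]: "zpoly_eval f (of_nat n) = of_nat n"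
  by (induct n) (simp_all add: eval_add)

lemma eval_power: "zpoly_eval f (P ^ n) = zpoly_eval f P ^ n"
  by (induct n) (simp_all add: eval_mult)

lemma eval_sum: "zpoly_eval f (sum g A) = (\<Sum>x\<in>A. zpoly_eval f (g x))"
  by (induct A rule: infinite_finite_induct) (simp_all add: eval_add)

lemma eval_pvar [simp]: "zpoly_eval f (pvar k) = f k"
  by (simp add: pvar_def eval_single mon_def)

lemma eval_witt_poly:
  "zpoly_eval f (witt_poly p Z n) = (\<Sum>i\<le>n. of_nat (p ^ i) * zpoly_eval f (Z i) ^ (p ^ (n - i)))"
  by (simp add: witt_poly_def eval_sum eval_mult eval_power)


definition kill :: "nat set \<Rightarrow> zpoly \<Rightarrow> zpoly" where
  "kill Z P = Abs_poly_mapping (\<lambda>m. if Poly_Mapping.keys m \<inter> Z = {} then Poly_Mapping.lookup P m else 0)"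

lemma lookup_kill:
  "Poly_Mapping.lookup (kill Z P) m = (if Poly_Mapping.keys m \<inter> Z = {} then Poly_Mapping.lookup P m else 0)"
proof -
  have "finite {m. (if Poly_Mapping.keys m \<inter> Z = {} then Poly_Mapping.lookup P m else 0) \<noteq> 0}"
    by (rule finite_subset[OF _ finite_lookup[of P]]) auto
  then show ?thesis unfolding kill_def by simp
qed

definition ksub :: "nat set \<Rightarrow> nat \<Rightarrow> zpoly" where
  "ksub Z k = (if k \<in> Z then 0 else pvar k)"

lemma pvar_power: "pvar i ^ e = Poly_Mapping.single (Poly_Mapping.single i e) 1"
proof (induct e)
  case 0 then show ?case by simp
next
  case (Suc e)
  then show ?case
    by (simp add: pvar_def mult_single single_add[symmetric])
qed

lemma prod_single: "finite S \<Longrightarrow> (\<Prod>i\<in>S. Poly_Mapping.single (g i) (1::int)) = Poly_Mapping.single (sum g S) 1"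
  by (induct S rule: finite_induct) (simp_all add: mult_single)

lemma sum_single_keys: "(\<Sum>i\<in>Poly_Mapping.keys m. Poly_Mapping.single i (Poly_Mapping.lookup m i)) = m"
  by (rule poly_mapping_eqI) (auto simp: lookup_sum lookup_single when_def in_keys_iff)

lemma kill_add: "kill Z (P + Q) = kill Z P + kill Z Q"
  by (rule poly_mapping_eqI) (simp add: lookup_kill lookup_add)

lemma kill_single:
  "kill Z (Poly_Mapping.single m c) = (if Poly_Mapping.keys m \<inter> Z = {} then Poly_Mapping.single m c else 0)"
  by (rule poly_mapping_eqI) (auto simp: lookup_kill lookup_single when_def)

lemma kill_eq_eval: "kill Z P = zpoly_eval (ksub Z) P"
proof (induct P rule: pm_induct)
  case 1 then show ?case by (rule poly_mapping_eqI) (simp add: lookup_kill)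
next
  case (2 P m c)
  have "kill Z (Poly_Mapping.single m c) = zpoly_eval (ksub Z) (Poly_Mapping.single m c)"
  proof (cases "Poly_Mapping.keys m \<inter> Z = {}")
    case True
    have "mon (ksub Z) m = (\<Prod>i\<in>Poly_Mapping.keys m. pvar i ^ Poly_Mapping.lookup m i)"
      unfolding mon_def using True by (intro prod.cong) (auto simp: ksub_def)
    also have "\<dots> = Poly_Mapping.single m 1"
      by (simp add: pvar_power prod_single sum_single_keys)
    finally show ?thesis using True
      by (simp add: kill_single eval_single mult_single flip: single_of_int)
  next
    case False
    then obtain i where "i \<in> Poly_Mapping.keys m" "i \<in> Z" by auto
    then have "mon (ksub Z) m = 0" by (intro mon_vanish) (auto simp: ksub_def)
    then show ?thesis using False by (simp add: kill_single eval_single)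
  qed
  with 2 show ?case by (simp add: kill_add eval_add)
qed

lemma kill_mult: "kill Z (P * Q) = kill Z P * kill Z Q"
  by (simp add: kill_eq_eval eval_mult)
lemma kill_diff: "kill Z (P - Q) = kill Z P - kill Z Q"
  by (simp add: kill_eq_eval eval_diff)
lemma kill_of_nat [simp]: "kill Z (of_nat n) = of_nat n"
  by (simp add: kill_eq_eval)
lemma kill_power: "kill Z (P ^ n) = kill Z P ^ n"
  by (simp add: kill_eq_eval eval_power)
lemma kill_sum: "kill Z (sum g A) = (\<Sum>x\<in>A. kill Z (g x))"
  by (simp add: kill_eq_eval eval_sum)
lemma kill_pvar: "kill Z (pvar k) = (if k \<in> Z then 0 else pvar k)"
  by (simp add: kill_eq_eval ksub_def)
lemma kill_witt_poly:
  "kill Z (witt_poly p W n) = witt_poly p (\<lambda>i. kill Z (W i)) n"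
  by (simp add: kill_eq_eval witt_poly_def eval_sum eval_mult eval_power)

lemma lookup_coeff_div: "Poly_Mapping.lookup (coeff_div d P) m = Poly_Mapping.lookup P m div d"
  by (simp add: coeff_div_def Poly_Mapping.map.rep_eq when_def)

lemma kill_coeff_div: "kill Z (coeff_div d P) = coeff_div d (kill Z P)"
  by (rule poly_mapping_eqI) (simp add: lookup_kill lookup_coeff_div)

lemma coeff_div_of_nat_mult:
  assumes "c > 0"
  shows "coeff_div (int c) (of_nat c * Q) = Q"
proof -
  have "of_nat c * Q = Poly_Mapping.map ((*) (of_nat c)) Q"
    by (simp add: mult_map_scale_conv_mult flip: single_of_nat)
  then show ?thesis using assms
    by (intro poly_mapping_eqI) (simp add: lookup_coeff_div Poly_Mapping.map.rep_eq when_def)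
qed

lemma eval_kill:
  assumes "\<And>k. k \<in> Z \<Longrightarrow> f k = 0"
  shows "zpoly_eval f (kill Z P) = zpoly_eval f P"
proof -
  have sub: "Poly_Mapping.keys (kill Z P) \<subseteq> Poly_Mapping.keys P"
    by (auto simp: in_keys_iff lookup_kill split: if_splits)
  have "zpoly_eval f (kill Z P) = (\<Sum>m\<in>Poly_Mapping.keys P. of_int (Poly_Mapping.lookup (kill Z P) m) * mon f m)"
    by (rule eval_superset[OF finite_keys sub])
  also have "\<dots> = (\<Sum>m\<in>Poly_Mapping.keys P. of_int (Poly_Mapping.lookup P m) * mon f m)"
  proof (intro sum.cong refl)
    fix m
    show "of_int (Poly_Mapping.lookup (kill Z P) m) * mon f m = of_int (Poly_Mapping.lookup P m) * mon f m"
    proof (cases "Poly_Mapping.keys m \<inter> Z = {}")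
      case False
      then obtain i where "i \<in> Poly_Mapping.keys m" "i \<in> Z" by auto
      then have "mon f m = 0" using assms by (intro mon_vanish) auto
      then show ?thesis by simp
    qed (simp add: lookup_kill)
  qed
  also have "\<dots> = zpoly_eval f P" by (simp add: zpoly_eval_def mon_def)
  finally show ?thesis .
qed


lemma wsl_len: "length (witt_sum_list p n) = n"
  by (induct n) (simp_all add: Let_def)

lemma wsl_nth: "i < n \<Longrightarrow> witt_sum_list p n ! i = witt_sum_poly p i"
proof (induct n)
  case 0 then show ?case by simp
next
  case (Suc n)
  show ?case
  proof (cases "i < n")
    case True
    then show ?thesis using Suc by (simp add: Let_def nth_append wsl_len)
  next
    case False
    then have "i = n" using Suc by simp
    then show ?thesis by (simp add: witt_sum_poly_def)
  qed
qed

lemma wsp_rec: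
  "witt_sum_poly p n = coeff_div (int (p ^ n))
     (witt_poly p Xv n + witt_poly p Yv n - (\<Sum>i<n. of_nat (p ^ i) * (witt_sum_poly p i) ^ (p ^ (n - i))))"
proof -
  have "witt_sum_poly p n = coeff_div (int (p ^ n))
     (witt_poly p Xv n + witt_poly p Yv n - (\<Sum>i<n. of_nat (p ^ i) * (witt_sum_list p n ! i) ^ (p ^ (n - i))))"
    by (simp add: witt_sum_poly_def Let_def nth_append wsl_len)
  also have "(\<Sum>i<n. of_nat (p ^ i) * (witt_sum_list p n ! i) ^ (p ^ (n - i)))
      = (\<Sum>i<n. of_nat (p ^ i) * (witt_sum_poly p i) ^ (p ^ (n - i)))"
    by (intro sum.cong refl) (simp add: wsl_nth)
  finally show ?thesis .
qed

lemma witt_poly_split: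
  "witt_poly p W n = (\<Sum>i<n. of_nat (p ^ i) * (W i) ^ (p ^ (n - i))) + of_nat (p ^ n) * W n"
  unfolding witt_poly_def by (simp flip: lessThan_Suc_atMost)

lemma kill_wsp:
  assumes p: "p > 0"
    and h: "\<And>n. n \<le> k \<Longrightarrow> kill Z (witt_poly p Xv n) + kill Z (witt_poly p Yv n) = witt_poly p C n"
  shows "n \<le> k \<Longrightarrow> kill Z (witt_sum_poly p n) = C n"
proof (induct n rule: less_induct)
  case (less n)
  have IH: "\<And>i. i < n \<Longrightarrow> kill Z (witt_sum_poly p i) = C i" using less by simp
  have "kill Z (witt_sum_poly p n) = coeff_div (int (p ^ n))
     (kill Z (witt_poly p Xv n) + kill Z (witt_poly p Yv n) - (\<Sum>i<n. of_nat (p ^ i) * (kill Z (witt_sum_poly p i)) ^ (p ^ (n - i))))"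
    by (subst wsp_rec) (simp add: kill_coeff_div kill_diff kill_add kill_sum kill_mult kill_power del: of_nat_power)
  also have "(\<Sum>i<n. of_nat (p ^ i) * (kill Z (witt_sum_poly p i)) ^ (p ^ (n - i)))
      = (\<Sum>i<n. of_nat (p ^ i) * (C i) ^ (p ^ (n - i)))"
    by (intro sum.cong refl) (simp add: IH)
  also have "kill Z (witt_poly p Xv n) + kill Z (witt_poly p Yv n) = witt_poly p C n"
    using h less by simp
  finally show ?case
    by (simp add: witt_poly_split coeff_div_of_nat_mult p del: of_nat_power)
qed

lemma w_ident:
  assumes p: "p > 0" and B: "\<And>i. i < k \<Longrightarrow> B i = 0" and n: "n \<le> k"
  shows "witt_poly p A n + witt_poly p B n = witt_poly p (\<lambda>i. if i < k then A i else A k + B k) n"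
proof (cases "n < k")
  case True
  have "witt_poly p B n = 0" unfolding witt_poly_def using True p
    by (intro sum.neutral) (auto simp: B zero_power)
  moreover have "witt_poly p (\<lambda>i. if i < k then A i else A k + B k) n = witt_poly p A n"
    unfolding witt_poly_def using True by (intro sum.cong) auto
  ultimately show ?thesis by simp
next
  case False
  with n have nk: "n = k" by simp
  have "(\<Sum>i<k. of_nat (p ^ i) * (B i) ^ (p ^ (k - i))) = (0::zpoly)"
    using p by (intro sum.neutral) (auto simp: B zero_power)
  moreover have "(\<Sum>i<k. of_nat (p ^ i) * ((\<lambda>i. if i < k then A i else A k + B k) i) ^ (p ^ (k - i)))
     = (\<Sum>i<k. of_nat (p ^ i) * (A i) ^ (p ^ (k - i)))"
    by (intro sum.cong) auto
  ultimately show ?thesis unfolding nk witt_poly_split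
    by (simp add: algebra_simps del: of_nat_power)
qed

definition Zx :: "nat \<Rightarrow> nat set" where "Zx k = {2 * i | i. i < k}"
definition Zy :: "nat \<Rightarrow> nat set" where "Zy k = {2 * i + 1 | i. i < k}"

lemma kill_Zy_X: "kill (Zy k) (Xv i) = Xv i"
  by (auto simp: Xv_def kill_pvar Zy_def) presburger
lemma kill_Zy_Y: "kill (Zy k) (Yv i) = (if i < k then 0 else Yv i)"
  by (auto simp: Yv_def kill_pvar Zy_def)
lemma kill_Zx_Y: "kill (Zx k) (Yv i) = Yv i"
  by (auto simp: Yv_def kill_pvar Zx_def) presburger
lemma kill_Zx_X: "kill (Zx k) (Xv i) = (if i < k then 0 else Xv i)"
  by (auto simp: Xv_def kill_pvar Zx_def)

lemma kill_Zy_wsp: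
  assumes "p > 0" "n \<le> k"
  shows "kill (Zy k) (witt_sum_poly p n) = (if n < k then Xv n else Xv k + Yv k)"
proof -
  have "kill (Zy k) (witt_sum_poly p n) = (\<lambda>i. if i < k then Xv i else Xv k + Yv k) n"
  proof (rule kill_wsp[OF assms(1) _ assms(2)])
    fix n assume "n \<le> k"
    then show "kill (Zy k) (witt_poly p Xv n) + kill (Zy k) (witt_poly p Yv n)
        = witt_poly p (\<lambda>i. if i < k then Xv i else Xv k + Yv k) n"
      using w_ident[OF assms(1), of k "\<lambda>i. if i < k then 0 else Yv i" n Xv]
      by (simp add: kill_witt_poly kill_Zy_X kill_Zy_Y)
  qed
  then show ?thesis by simp
qed

lemma kill_Zx_wsp:
  assumes "p > 0" "n \<le> k"
  shows "kill (Zx k) (witt_sum_poly p n) = (if n < k then Yv n else Yv k + Xv k)"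
proof -
  have "kill (Zx k) (witt_sum_poly p n) = (\<lambda>i. if i < k then Yv i else Yv k + Xv k) n"
  proof (rule kill_wsp[OF assms(1) _ assms(2)])
    fix n assume "n \<le> k"
    then show "kill (Zx k) (witt_poly p Xv n) + kill (Zx k) (witt_poly p Yv n)
        = witt_poly p (\<lambda>i. if i < k then Yv i else Yv k + Xv k) n"
      using w_ident[OF assms(1), of k "\<lambda>i. if i < k then 0 else Xv i" n Yv]
      by (simp add: kill_witt_poly kill_Zx_X kill_Zx_Y add.commute)
  qed
  then show ?thesis by simp
qed

definition wenv :: "'a list \<Rightarrow> 'a list \<Rightarrow> nat \<Rightarrow> 'a" where
  "wenv x y k = (if even k then x ! (k div 2) else y ! (k div 2))"

lemma witt_add_nth:
  "n < length x \<Longrightarrow> witt_add p x y ! n = zpoly_eval (wenv x y) (witt_sum_poly p n)"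
  by (simp add: witt_add_def wenv_def[abs_def])

lemma length_witt_add [simp]: "length (witt_add p x y) = length x"
  by (simp add: witt_add_def)

lemma EvY:
  fixes x y :: "'a::comm_ring_1 list"
  assumes p: "p > 0" and y: "\<And>i. i < k \<Longrightarrow> y ! i = 0" and n: "n \<le> k" "n < length x"
  shows "witt_add p x y ! n = (if n < k then x ! n else x ! k + y ! k)"
proof -
  have "witt_add p x y ! n = zpoly_eval (wenv x y) (kill (Zy k) (witt_sum_poly p n))"
    by (subst eval_kill) (auto simp: witt_add_nth n Zy_def wenv_def y)
  then show ?thesis by (simp add: kill_Zy_wsp[OF p n(1)] eval_add Xv_def Yv_def wenv_def)
qed

lemma EvX:
  fixes x y :: "'a::comm_ring_1 list"
  assumes p: "p > 0" and x: "\<And>i. i < k \<Longrightarrow> x ! i = 0" and n: "n \<le> k" "n < length x"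
  shows "witt_add p x y ! n = (if n < k then y ! n else x ! k + y ! k)"
proof -
  have "witt_add p x y ! n = zpoly_eval (wenv x y) (kill (Zx k) (witt_sum_poly p n))"
    by (subst eval_kill) (auto simp: witt_add_nth n Zx_def wenv_def x)
  then show ?thesis by (simp add: kill_Zx_wsp[OF p n(1)] eval_add Xv_def Yv_def wenv_def add.commute)
qed


lemma Vpow: "(witt_V ^^ j) xs = replicate j 0 @ xs"
  by (induct j) (simp_all add: witt_V_def)

lemma zeros_right:
  fixes x :: "'a::comm_ring_1 list"
  shows "length x = s \<Longrightarrow> witt_add 2 x (replicate s 0) = x"
  by (rule nth_equalityI) (simp_all add: EvY[where k = s])

lemma zeros_left:
  fixes y :: "'a::comm_ring_1 list"
  assumes "length y = s"
  shows "witt_add 2 (replicate s 0) y = y"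
proof (rule nth_equalityI)
  show "length (witt_add 2 (replicate s 0) y) = length y" using assms by simp
next
  fix n assume "n < length (witt_add 2 (replicate s 0) y)"
  then have n: "n < s" by simp
  have "witt_add 2 (replicate s 0) y ! n = (if n < s - 1 then y ! n else replicate s 0 ! (s - 1) + y ! (s - 1))"
    using n assms by (intro EvX) auto
  moreover have "\<not> n < s - 1 \<Longrightarrow> n = s - 1" using n by arith
  ultimately show "witt_add 2 (replicate s 0) y ! n = y ! n"
    using n by (cases "n < s - 1") auto
qed

lemma mult_2_1: "multiplicity (2::nat) 1 = 0" by simp
lemma mult_2_2: "multiplicity (2::nat) 2 = 1"
  by (rule multiplicity_self) auto

lemma fil_len: "a \<in> witt_fil ord p n s \<Longrightarrow> length a = s"
  by (simp add: witt_fil_def)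

lemma fil_W1: "[c] \<in> witt_fil ord 2 n 1 \<longleftrightarrow> (c \<noteq> 0 \<longrightarrow> - n \<le> ord c)"
  by (simp add: witt_fil_def wcomp_def)

lemma len1: "length a = Suc 0 \<Longrightarrow> \<exists>c. a = [c]"
  by (cases a) auto

lemma fil1: "witt_fil' ord 2 1 s = witt_fil ord 2 0 s"
proof -
  have W0: "witt_fil ord 2 1 0 = {[]}" by (auto simp: witt_fil_def)
  show ?thesis
    by (auto simp: witt_fil'_def W0 Vpow zeros_right fil_len)
      (metis fil_len zeros_right)
qed

lemma fil2:
  assumes "1 \<le> s"
  shows "w \<in> witt_fil' ord 2 2 s \<longleftrightarrow>
    (\<exists>a b. w = witt_add 2 a (replicate (s - 1) 0 @ [b]) \<and> a \<in> witt_fil ord 2 1 s \<and> (b \<noteq> 0 \<longrightarrow> -2 \<le> ord b))"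
proof -
  have m: "min (multiplicity (2::nat) 2) s = 1" using assms by (simp add: mult_2_2)
  have "witt_fil ord 2 (int 2) 1 = {[b] | b. b \<noteq> 0 \<longrightarrow> -2 \<le> ord b}"
  proof (rule set_eqI, rule iffI)
    fix x assume x: "x \<in> witt_fil ord 2 (int 2) 1"
    then obtain c where c: "x = [c]" using fil_len len1 by fastforce
    with x show "x \<in> {[b] | b. b \<noteq> 0 \<longrightarrow> -2 \<le> ord b}" using fil_W1[of c ord "int 2"] by auto
  next
    fix x assume "x \<in> {[b] | b. b \<noteq> 0 \<longrightarrow> -2 \<le> ord b}"
    then obtain c where c: "x = [c]" "c \<noteq> 0 \<longrightarrow> -2 \<le> ord c" by auto
    then show "x \<in> witt_fil ord 2 (int 2) 1" using fil_W1[of c ord "int 2"] by auto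
  qed
  then show ?thesis
    unfolding witt_fil'_def Let_def m Vpow by (simp add: image_def) blast
qed

lemma ultra:
  assumes "normalized_discrete_valuation ord"
    and "x \<noteq> 0 \<longrightarrow> c \<le> ord x" "y \<noteq> 0 \<longrightarrow> c \<le> ord y"
  shows "x + y \<noteq> 0 \<longrightarrow> c \<le> ord (x + y)"
proof (cases "x = 0 \<or> y = 0")
  case True then show ?thesis using assms by auto
next
  case False
  then have "x + y \<noteq> 0 \<longrightarrow> min (ord x) (ord y) \<le> ord (x + y)"
    using assms(1) unfolding normalized_discrete_valuation_def by blast
  then show ?thesis using assms False by auto
qed


lemma Va_nth: "i < Suc k \<Longrightarrow> (replicate k 0 @ [a]) ! i = (if i < k then 0 else a)"
  by (auto simp: nth_append)

lemma zeros_fil: "replicate s 0 \<in> witt_fil ord p n s"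
  by (simp add: witt_fil_def wcomp_def)

lemma fil2_1:
  assumes "normalized_discrete_valuation ord"
  shows "[a] \<in> witt_fil' ord 2 2 1 \<longleftrightarrow> (a \<noteq> 0 \<longrightarrow> -2 \<le> ord a)"
proof
  assume "[a] \<in> witt_fil' ord 2 2 1"
  then obtain A b where Ab: "[a] = witt_add 2 A [b]" "A \<in> witt_fil ord 2 1 1" "b \<noteq> 0 \<longrightarrow> -2 \<le> ord b"
    using fil2[where s=1 and w="[a]" and ord=ord] by auto
  then obtain x where x: "A = [x]" using fil_len len1 by fastforce
  have "[a] ! 0 = witt_add 2 [x] [b] ! 0" using Ab x by simp
  also have "\<dots> = x + b" by (subst EvX[where k = 0]) auto
  finally have ab: "a = x + b" by simp
  have "x \<noteq> 0 \<longrightarrow> -2 \<le> ord x" using Ab(2) x fil_W1[of x ord 1] by auto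
  then show "a \<noteq> 0 \<longrightarrow> -2 \<le> ord a"
    using ultra[OF assms, of x "-2" b] Ab(3) ab by simp
next
  assume "a \<noteq> 0 \<longrightarrow> -2 \<le> ord a"
  moreover have "[a] = witt_add 2 [0] [a]" using zeros_left[of "[a]" 1] by simp
  ultimately show "[a] \<in> witt_fil' ord 2 2 1"
    using fil2[where s=1 and w="[a]" and ord=ord] zeros_fil[of 1 ord 2 1] by auto
qed


theorem lemma1p9:
  fixes ord :: "'a::field \<Rightarrow> int" and s :: nat
  assumes "CHAR('a) = 2"
    and "complete_discrete_valuation ord"
    and "1 \<le> s"
  shows "(\<forall>a. [a] \<in> witt_fil' ord 2 2 1 \<longrightarrow> (witt_V ^^ (s - 1)) [a] \<in> witt_fil' ord 2 2 s)
       \<and> (\<forall>a. [a] \<in> witt_fil' ord 2 1 1 \<longrightarrow> (witt_V ^^ (s - 1)) [a] \<in> witt_fil' ord 2 1 s)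
       \<and> (\<forall>a b :: 'a. (witt_V ^^ (s - 1)) [a + b]
                 = witt_add 2 ((witt_V ^^ (s - 1)) [a]) ((witt_V ^^ (s - 1)) [b]))
       \<and> (\<forall>a b. [a] \<in> witt_fil' ord 2 2 1 \<longrightarrow> [b] \<in> witt_fil' ord 2 2 1 \<longrightarrow>
                (\<exists>u\<in>witt_fil' ord 2 1 s.
                    (witt_V ^^ (s - 1)) [a] = witt_add 2 ((witt_V ^^ (s - 1)) [b]) u) \<longrightarrow>
                [a - b] \<in> witt_fil' ord 2 1 1)
       \<and> (\<forall>w\<in>witt_fil' ord 2 2 s. \<exists>a. [a] \<in> witt_fil' ord 2 2 1 \<and>
                (\<exists>u\<in>witt_fil' ord 2 1 s. w = witt_add 2 ((witt_V ^^ (s - 1)) [a]) u))"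
proof -
  have nv: "normalized_discrete_valuation ord"
    using assms(2) by (simp add: complete_discrete_valuation_def)
  define k where "k = s - 1"
  have sk: "s = Suc k" using assms(3) k_def by simp
  have V: "\<And>a. (witt_V ^^ (s - 1)) [a] = replicate k 0 @ [a]" by (simp add: Vpow k_def)
  have lenV: "\<And>a::'a. length (replicate k 0 @ [a]) = s" by (simp add: sk)
  have Vnth: "\<And>a::'a. \<And>i. i < s \<Longrightarrow> (replicate k 0 @ [a]) ! i = (if i < k then 0 else a)"
    using sk by (simp add: Va_nth)
  have fil2s: "\<And>w. w \<in> witt_fil' ord 2 2 s \<longleftrightarrow>
    (\<exists>a b. w = witt_add 2 a (replicate k 0 @ [b]) \<and> a \<in> witt_fil ord 2 1 s \<and> (b \<noteq> 0 \<longrightarrow> -2 \<le> ord b))"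
    using fil2[OF assms(3)] k_def by simp
  have C1: "\<forall>a. [a] \<in> witt_fil' ord 2 2 1 \<longrightarrow> (witt_V ^^ (s - 1)) [a] \<in> witt_fil' ord 2 2 s"
  proof (intro allI impI)
    fix a assume "[a] \<in> witt_fil' ord 2 2 1"
    then have a: "a \<noteq> 0 \<longrightarrow> -2 \<le> ord a" using fil2_1[OF nv] by simp
    have "replicate k 0 @ [a] = witt_add 2 (replicate s 0) (replicate k 0 @ [a])"
      using zeros_left lenV by metis
    then show "(witt_V ^^ (s - 1)) [a] \<in> witt_fil' ord 2 2 s"
      unfolding V fil2s using a zeros_fil by blast
  qed
  have C2: "\<forall>a. [a] \<in> witt_fil' ord 2 1 1 \<longrightarrow> (witt_V ^^ (s - 1)) [a] \<in> witt_fil' ord 2 1 s"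
  proof (intro allI impI)
    fix a assume "[a] \<in> witt_fil' ord 2 1 1"
    then have "[a] \<in> witt_fil ord 2 0 1" by (simp only: fil1)
    then have a: "a \<noteq> 0 \<longrightarrow> 0 \<le> ord a" using fil_W1[of a ord 0] by simp
    show "(witt_V ^^ (s - 1)) [a] \<in> witt_fil' ord 2 1 s"
      unfolding V fil1 witt_fil_def wcomp_def
      using a by (auto simp: lenV Vnth sk)
  qed
  have C3: "\<forall>a b :: 'a. (witt_V ^^ (s - 1)) [a + b]
                 = witt_add 2 ((witt_V ^^ (s - 1)) [a]) ((witt_V ^^ (s - 1)) [b])"
  proof (intro allI)
    fix a b :: 'a
    show "(witt_V ^^ (s - 1)) [a + b] = witt_add 2 ((witt_V ^^ (s - 1)) [a]) ((witt_V ^^ (s - 1)) [b])"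
      unfolding V
    proof (rule nth_equalityI)
      fix n assume "n < length (replicate k 0 @ [a + b])"
      then have n: "n < s" using lenV by simp
      have "witt_add 2 (replicate k 0 @ [a]) (replicate k 0 @ [b]) ! n
         = (if n < k then (replicate k 0 @ [a]) ! n else (replicate k 0 @ [a]) ! k + (replicate k 0 @ [b]) ! k)"
        using n sk by (intro EvY) (auto simp: nth_append)
      then show "(replicate k 0 @ [a + b]) ! n = witt_add 2 (replicate k 0 @ [a]) (replicate k 0 @ [b]) ! n"
        using n by (simp add: Vnth sk)
    qed (simp add: lenV)
  qed
  have C4: "\<forall>a b. [a] \<in> witt_fil' ord 2 2 1 \<longrightarrow> [b] \<in> witt_fil' ord 2 2 1 \<longrightarrow>
                (\<exists>u\<in>witt_fil' ord 2 1 s.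
                    (witt_V ^^ (s - 1)) [a] = witt_add 2 ((witt_V ^^ (s - 1)) [b]) u) \<longrightarrow>
                [a - b] \<in> witt_fil' ord 2 1 1"
  proof (intro allI impI)
    fix a b
    assume "\<exists>u\<in>witt_fil' ord 2 1 s. (witt_V ^^ (s - 1)) [a] = witt_add 2 ((witt_V ^^ (s - 1)) [b]) u"
    then obtain u where u: "u \<in> witt_fil ord 2 0 s"
      and eq: "replicate k 0 @ [a] = witt_add 2 (replicate k 0 @ [b]) u"
      by (auto simp: fil1 V fil1[simplified] V[simplified])
    have lu: "length u = s" using u fil_len by blast
    have "a = (replicate k 0 @ [a]) ! k" by (simp add: nth_append)
    also have "\<dots> = witt_add 2 (replicate k 0 @ [b]) u ! k" using eq by simp
    also have "\<dots> = (replicate k 0 @ [b]) ! k + u ! k"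
      using sk by (subst EvX[where k = k]) (auto simp: nth_append)
    finally have ab: "a - b = u ! k" by (simp add: nth_append)
    have "u ! k \<noteq> 0 \<longrightarrow> 0 \<le> ord (u ! k)"
      using u lu sk unfolding witt_fil_def wcomp_def by auto
    then show "[a - b] \<in> witt_fil' ord 2 1 1"
      using ab fil_W1[of "a - b" ord 0] fil1[of ord 1] by simp
  qed
  have C5: "\<forall>w\<in>witt_fil' ord 2 2 s. \<exists>a. [a] \<in> witt_fil' ord 2 2 1 \<and>
                (\<exists>u\<in>witt_fil' ord 2 1 s. w = witt_add 2 ((witt_V ^^ (s - 1)) [a]) u)"
  proof
    fix w assume "w \<in> witt_fil' ord 2 2 s"
    then obtain x b where w: "w = witt_add 2 x (replicate k 0 @ [b])"
      and x: "x \<in> witt_fil ord 2 1 s" and b: "b \<noteq> 0 \<longrightarrow> -2 \<le> ord b"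
      using fil2s by blast
    have lx: "length x = s" using x fil_len by blast
    have xc: "\<And>i. i < s \<Longrightarrow> x ! (k - i) \<noteq> 0 \<Longrightarrow> -1 \<le> int (2 ^ i) * ord (x ! (k - i))"
      using x lx sk unfolding witt_fil_def wcomp_def by auto
    define a where "a = x ! k + b"
    define u where "u = take k x @ [0]"
    have lu: "length u = s" using lx sk by (simp add: u_def)
    have unth: "\<And>n. n < s \<Longrightarrow> u ! n = (if n < k then x ! n else 0)"
      using lx sk by (auto simp: u_def nth_append)
    have "x ! k \<noteq> 0 \<longrightarrow> -2 \<le> ord (x ! k)" using xc[of 0] sk by fastforce
    then have "a \<noteq> 0 \<longrightarrow> -2 \<le> ord a" unfolding a_def using ultra[OF nv _ b] by blast
    then have A: "[a] \<in> witt_fil' ord 2 2 1" using fil2_1[OF nv] by simp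
    have U: "u \<in> witt_fil ord 2 0 s"
      unfolding witt_fil_def
    proof (intro CollectI conjI allI impI)
      show "length u = s" by (rule lu)
    next
      fix i assume i: "i < s" and nz: "wcomp u i \<noteq> 0"
      have wc: "wcomp u i = u ! (k - i)" using lu sk by (simp add: wcomp_def)
      have "i \<noteq> 0" using nz wc unth sk by (cases "k - i < k") auto
      then have ki: "k - i < k" using i sk by simp
      then have xnz: "x ! (k - i) \<noteq> 0" and wcx: "wcomp u i = x ! (k - i)"
        using nz wc unth sk by auto
      have h: "-1 \<le> int (2 ^ i) * ord (x ! (k - i))" using xc[OF i xnz] .
      have two: "(2::int) \<le> int (2 ^ i)" using \<open>i \<noteq> 0\<close>
        by (metis Suc_1 Suc_leI gr0I numeral_le_iff of_nat_le_iff of_nat_numeral one_le_numeral self_le_power semiring_norm(69))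
      have "0 \<le> ord (x ! (k - i))"
      proof (rule ccontr)
        assume "\<not> 0 \<le> ord (x ! (k - i))"
        then have "ord (x ! (k - i)) \<le> -1" by simp
        then have "int (2 ^ i) * ord (x ! (k - i)) \<le> int (2 ^ i) * (-1)"
          by (intro mult_left_mono) auto
        with two h show False by simp
      qed
      then show "- 0 \<le> int (2 ^ i) * ord (wcomp u i)" using wcx by simp
    qed
    have "w = witt_add 2 ((witt_V ^^ (s - 1)) [a]) u"
      unfolding V
    proof (rule nth_equalityI)
      show "length w = length (witt_add 2 (replicate k 0 @ [a]) u)" using w lx lenV by simp
    next
      fix n assume "n < length w"
      then have n: "n < s" using w lx by simp
      have e1: "w ! n = (if n < k then x ! n else x ! k + (replicate k 0 @ [b]) ! k)"
        unfolding w using n sk lx by (intro EvY) (auto simp: nth_append)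
      have e2: "witt_add 2 (replicate k 0 @ [a]) u ! n
          = (if n < k then u ! n else (replicate k 0 @ [a]) ! k + u ! k)"
        using n sk by (intro EvX) (auto simp: nth_append)
      show "w ! n = witt_add 2 (replicate k 0 @ [a]) u ! n"
        using e1 e2 n unth sk by (simp add: a_def nth_append)
    qed
    then show "\<exists>a. [a] \<in> witt_fil' ord 2 2 1 \<and>
                (\<exists>u\<in>witt_fil' ord 2 1 s. w = witt_add 2 ((witt_V ^^ (s - 1)) [a]) u)"
      using A U fil1 by blast
  qed
  show ?thesis using C1 C2 C3 C4 C5 by blast
qed

end
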